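(* Let $k,m\in\mathbb{N}$ with $m<k\le 2m$, $k$ even, and $\gcd(2k+1,2(2m+1))=1$; let $a>0$ satisfy $\frac{1}{4km+3k+m+1}\le\frac{a}{2k+1}\le\frac{1}{4km+k+3m+1}$ and put $b=\frac{2k+1}{2a(2m+1)}$ and $Y=\frac{1}{2a(2m+1)}$. For $s=0,\dots,4m+1$, $n=0,\dots,2k$ define $X_{sn}=\frac{s}{2(2m+1)}-\frac{n}{2k+1}$, $\Phi_{sn}=\sum_{l\in\mathbb{Z}}Q_2\big(2a(2m+1)(l+X_{sn})\big)$ with $Q_2(x)=(1-|x|)\chi_{[-1,1]}(x)$, and $A_{sn}=\Phi_{sn}-\Phi_{s,2k+1-n}$ for $n=1,\dots,k$. Then for $s=1,\dots,m$ and $n=1,\dots,k/2$, $$A_{sn}=\begin{cases}2n/b,& 0<X_{sn}<Y,\\ 2as,& -Y<X_{sn}<0.\end{cases}$$ *)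

theory Defs
  imports "HOL-Analysis.Analysis"
begin

definition Q2 :: "real \<Rightarrow> real" where
  "Q2 x = (if \<bar>x\<bar> \<le> 1 then 1 - \<bar>x\<bar> else 0)"

definition Xsn :: "nat \<Rightarrow> nat \<Rightarrow> nat \<Rightarrow> nat \<Rightarrow> real" where
  "Xsn k m s n = real s / (2 * (2 * real m + 1)) - real n / (2 * real k + 1)"

definition Phi :: "real \<Rightarrow> nat \<Rightarrow> nat \<Rightarrow> nat \<Rightarrow> nat \<Rightarrow> real" where
  "Phi a k m s n = (\<Sum>\<^sub>\<infinity> l::int. Q2 (2 * a * (2 * real m + 1) * (real_of_int l + Xsn k m s n)))"

definition Asn :: "real \<Rightarrow> nat \<Rightarrow> nat \<Rightarrow> nat \<Rightarrow> nat \<Rightarrow> real" where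
  "Asn a k m s n = Phi a k m s n - Phi a k m s (2 * k + 1 - n)"

end

theory Submission
  imports Defs
begin

lemma int_shift_bound:
  fixes j :: int and t :: real
  assumes "j \<noteq> 0"
  shows "1 - \<bar>t\<bar> \<le> \<bar>real_of_int j + t\<bar>"
proof -
  have "1 \<le> \<bar>real_of_int j\<bar>" using assms by linarith
  thus ?thesis by linarith
qed

lemma phi_single:
  fixes c t :: real and l0 :: int
  assumes "\<And>l::int. l \<noteq> l0 \<Longrightarrow> 1 \<le> c * \<bar>real_of_int l + t\<bar>" "c > 0"
  shows "(\<Sum>\<^sub>\<infinity> l::int. Q2 (c * (real_of_int l + t))) = Q2 (c * (real_of_int l0 + t))"
proof -
  have "(\<Sum>\<^sub>\<infinity> l::int. Q2 (c * (real_of_int l + t))) = (\<Sum>\<^sub>\<infinity> l\<in>{l0}. Q2 (c * (real_of_int l + t)))"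
  proof (rule infsum_cong_neutral)
    fix l assume "l \<in> UNIV - {l0}"
    hence "1 \<le> c * \<bar>real_of_int l + t\<bar>" using assms(1) by auto
    moreover have "\<bar>c * (real_of_int l + t)\<bar> = c * \<bar>real_of_int l + t\<bar>"
      using assms(2) by (simp add: abs_mult)
    ultimately show "Q2 (c * (real_of_int l + t)) = 0" unfolding Q2_def by auto
  qed auto
  thus ?thesis by simp
qed

theorem lemma3p4:
  fixes k m :: nat and a b Y :: real
  assumes "m < k" and "k \<le> 2 * m" and "even k"
    and "gcd (2 * k + 1) (2 * (2 * m + 1)) = 1"
    and "a > 0"
    and "1 / (4 * real k * real m + 3 * real k + real m + 1) \<le> a / (2 * real k + 1)"
    and "a / (2 * real k + 1) \<le> 1 / (4 * real k * real m + real k + 3 * real m + 1)"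
    and "b = (2 * real k + 1) / (2 * a * (2 * real m + 1))"
    and "Y = 1 / (2 * a * (2 * real m + 1))"
  shows "\<forall>s \<in> {1..m}. \<forall>n \<in> {1..k div 2}.
           (0 < Xsn k m s n \<and> Xsn k m s n < Y \<longrightarrow> Asn a k m s n = 2 * real n / b) \<and>
           (- Y < Xsn k m s n \<and> Xsn k m s n < 0 \<longrightarrow> Asn a k m s n = 2 * a * real s)"
proof (intro ballI)
  fix s n assume sS: "s \<in> {1..m}" and nS: "n \<in> {1..k div 2}"
  define c where "c = 2 * a * (2 * real m + 1)"
  define p where "p = real s / (2 * (2 * real m + 1))"
  define q where "q = real n / (2 * real k + 1)"
  have cpos: "c > 0" using assms(5) by (simp add: c_def)
  have s1: "1 \<le> real s" "real s \<le> real m" using sS by auto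
  have n1: "1 \<le> real n" "2 * real n \<le> real k" using nS assms(3) by auto
  have p0: "p > 0" using s1 by (simp add: p_def)
  have q0: "q > 0" using n1 by (simp add: q_def)
  define K where "K = real k" 
  define M where "M = real m"
  have KM: "M < K" "K \<le> 2 * M" using assms(1,2) by (auto simp: K_def M_def)
  have pk: "2 * real k + 1 > 0" "2 * real m + 1 > 0" "2 * (2 * real m + 1) > 0" by auto
  have cp: "c * p = a * real s" unfolding c_def p_def using pk by (simp add: field_simps)
  have cq: "c * q = a * (2 * real n * (2*M+1)) / (2*K+1)" unfolding c_def q_def K_def M_def by simp
  have KK: "2*K+1 > 0" using pk by (simp add: K_def)
  have cpq: "c * (p + q) = a * (real s * (2*K+1) + 2 * real n * (2*M+1)) / (2*K+1)"
    using cp cq KK by (simp add: distrib_left field_simps)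
  have cpq2: "c * (1 - p - q) = a * (2*(2*M+1)*(2*K+1) - real s * (2*K+1) - 2 * real n * (2*M+1)) / (2*K+1)"
  proof -
    have c1: "c = a*(2*(2*M+1)*(2*K+1))/(2*K+1)" using KK by (simp add: c_def M_def)
    have "c*(1-p-q) = c - c*(p+q)" by (simp add: algebra_simps)
    also have "\<dots> = a*(2*(2*M+1)*(2*K+1))/(2*K+1) - a * (real s * (2*K+1) + 2 * real n * (2*M+1)) / (2*K+1)"
      using c1 cpq by simp
    also have "\<dots> = a * (2*(2*M+1)*(2*K+1) - real s * (2*K+1) - 2 * real n * (2*M+1)) / (2*K+1)"
      by (simp add: diff_divide_distrib[symmetric] algebra_simps)
    finally show ?thesis .
  qed
  have Mpos0: "M \<ge> 0" by (simp add: M_def)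
  have num1: "real s * (2*K+1) + 2 * real n * (2*M+1) \<le> 4*K*M + M + K"
  proof -
    have "real s * (2*K+1) \<le> M * (2*K+1)" using s1 by (simp add: M_def mult_right_mono K_def)
    moreover have "2 * real n * (2*M+1) \<le> K * (2*M+1)" using n1 Mpos0 unfolding K_def by (intro mult_right_mono) auto
    ultimately show ?thesis by (simp add: algebra_simps)
  qed
  have aub: "a \<le> (2*K+1) / (4*K*M + K + 3*M + 1)"
    using assms(7) KM unfolding K_def M_def by (simp add: field_simps mult.commute)
  have alb: "(2*K+1) / (4*K*M + 3*K + M + 1) \<le> a"
    using assms(6) KM unfolding K_def M_def by (simp add: field_simps mult.commute)
  have Kpos: "K \<ge> 1" using KM by (simp add: K_def M_def) 
  have Mpos: "M \<ge> 0" by (simp add: M_def)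
  have KMn: "K*M \<ge> 0" using Kpos Mpos by simp
  have den1: "4*K*M+K+3*M+1 > 0" using KMn Mpos Kpos mult.assoc[of 4 K M] by linarith
  have den2: "4*K*M+3*K+M+1 > 0" using KMn Mpos Kpos mult.assoc[of 4 K M] by linarith
  define N where "N = real s * (2*K+1) + 2 * real n * (2*M+1)"
  have Nnn: "0 \<le> N" unfolding N_def using Kpos Mpos by simp
  have N1: "N \<le> 4*K*M + M + K" using num1 unfolding N_def .
  have aden1: "a * (4*K*M + K + 3*M + 1) \<le> 2*K+1"
    using aub den1 by (simp add: le_divide_eq)
  have aden2: "2*K+1 \<le> a * (4*K*M + 3*K + M + 1)"
    using alb den2 by (simp add: divide_le_eq)
  have i: "c * (p + q) < 1"
  proof -
    have "a * N \<le> a * (4*K*M + M + K)" using N1 assms(5) by (intro mult_left_mono) auto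
    also have "\<dots> < a * (4*K*M + K + 3*M + 1)" using assms(5) KM Kpos Mpos by (intro mult_strict_left_mono) auto
    finally have "a * N < 2*K+1" using aden1 by linarith
    thus ?thesis unfolding cpq N_def[symmetric] using KK by (simp add: divide_less_eq)
  qed
  have ii: "1 \<le> c * (1 - p - q)"
  proof -
    have D: "2*(2*M+1)*(2*K+1) = 8*(K*M) + 4*K + 4*M + 2" by (simp add: algebra_simps)
    have "4*K*M + 3*K + M + 1 \<le> 2*(2*M+1)*(2*K+1) - N" using N1 Mpos KMn unfolding D
      by (simp add: algebra_simps)
    hence "a * (4*K*M + 3*K + M + 1) \<le> a * (2*(2*M+1)*(2*K+1) - N)" using assms(5) by (intro mult_left_mono) auto
    hence "2*K+1 \<le> a * (2*(2*M+1)*(2*K+1) - N)" using aden2 by linarith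
    moreover have "c * (1 - p - q) = a * (2*(2*M+1)*(2*K+1) - N) / (2*K+1)" unfolding cpq2 N_def by (simp add: algebra_simps)
    ultimately show ?thesis using KK by (simp add: le_divide_eq)
  qed
  have X1: "Xsn k m s n = p - q" unfolding Xsn_def p_def q_def by simp
  have nle: "n \<le> 2 * k + 1" using nS by auto
  have X2: "Xsn k m s (2 * k + 1 - n) = p + q - 1"
    unfolding Xsn_def p_def q_def using nle pk by (simp add: of_nat_diff diff_divide_distrib)
  have absb: "\<bar>p - q\<bar> \<le> p + q" using p0 q0 by linarith
  have bnd: "1 \<le> c * \<bar>real_of_int j + t\<bar>" if "j \<noteq> 0" "\<bar>t\<bar> \<le> p + q" for j t
  proof -
    have "1 - (p+q) \<le> \<bar>real_of_int j + t\<bar>" using int_shift_bound[OF that(1), of t] that(2) by linarith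
    hence "c * (1 - p - q) \<le> c * \<bar>real_of_int j + t\<bar>" using cpos by (intro mult_left_mono) auto
    thus ?thesis using ii by linarith
  qed
  have Phi1: "Phi a k m s n = Q2 (c * (p - q))"
  proof -
    have "Phi a k m s n = (\<Sum>\<^sub>\<infinity> l::int. Q2 (c * (real_of_int l + (p - q))))"
      unfolding Phi_def X1 c_def ..
    also have "\<dots> = Q2 (c * (real_of_int 0 + (p - q)))"
      using bnd absb cpos by (intro phi_single) auto
    finally show ?thesis by simp
  qed
  have Phi2: "Phi a k m s (2 * k + 1 - n) = Q2 (c * (p + q))"
  proof -
    have "Phi a k m s (2 * k + 1 - n) = (\<Sum>\<^sub>\<infinity> l::int. Q2 (c * (real_of_int l + (p + q - 1))))"
      unfolding Phi_def X2 c_def ..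
    also have "\<dots> = Q2 (c * (real_of_int 1 + (p + q - 1)))"
    proof (intro phi_single cpos)
      fix l :: int assume "l \<noteq> 1"
      hence "1 \<le> c * \<bar>real_of_int (l - 1) + (p + q)\<bar>" using bnd[of "l - 1" "p + q"] p0 q0 by auto
      thus "1 \<le> c * \<bar>real_of_int l + (p + q - 1)\<bar>" by (simp add: algebra_simps)
    qed
    finally show ?thesis by simp
  qed
  have cpq_le: "c * \<bar>p - q\<bar> < 1" using i absb cpos
    by (meson le_less_trans mult_left_mono less_imp_le)
  have Q2a: "Q2 (c * (p - q)) = 1 - c * \<bar>p - q\<bar>"
    using cpq_le cpos unfolding Q2_def by (simp add: abs_mult)
  have Q2b: "Q2 (c * (p + q)) = 1 - c * (p + q)"
    using i cpos p0 q0 unfolding Q2_def by (simp add: abs_mult)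
  have A: "Asn a k m s n = c * (p + q) - c * \<bar>p - q\<bar>"
    unfolding Asn_def Phi1 Phi2 Q2a Q2b by simp
  have bq: "2 * real n / b = 2 * (c * q)"
    unfolding assms(8) c_def q_def using pk assms(5) by (simp add: field_simps)
  have cp2: "c * p = a * real s" by (rule cp)
  show "(0 < Xsn k m s n \<and> Xsn k m s n < Y \<longrightarrow> Asn a k m s n = 2 * real n / b) \<and>
           (- Y < Xsn k m s n \<and> Xsn k m s n < 0 \<longrightarrow> Asn a k m s n = 2 * a * real s)"
  proof (intro conjI impI)
    assume "0 < Xsn k m s n \<and> Xsn k m s n < Y"
    hence "p - q > 0" using X1 by simp
    thus "Asn a k m s n = 2 * real n / b" unfolding A bq by (simp add: algebra_simps)
  next
    assume "- Y < Xsn k m s n \<and> Xsn k m s n < 0"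
    hence "p - q < 0" using X1 by simp
    thus "Asn a k m s n = 2 * a * real s" unfolding A using cp2 by (simp add: algebra_simps)
  qed
qed

end
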